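(* Let $e\ge 4$. The number of sparse colourings of the triangle $\triangle_{2,e-1}$ (a triangle of height $e-4$) equals the Catalan number $C_{e-3}=\frac{1}{e-2}\binom{2(e-3)}{e-3}$.
   Context: Dots are pairs of integers $(\alpha,\beta)$. For integers $\delta<\varepsilon$, the triangle $\triangle_{\delta,\varepsilon}$ is the set of dots $(\alpha,\beta)$ with $\delta\le\alpha$, $\beta\le\varepsilon$ and $\beta-\alpha\ge 2$; its height is $\varepsilon-\delta-1$. For a dot $(\alpha,\beta)\in\triangle_{\delta,\varepsilon}$, the sub-triangle $\triangle_{\alpha,\beta}$ is defined by the same rule. A colouring assigns to each dot the colour black or white. A coloured triangle $\triangle_{\delta,\varepsilon}$ is sparse if for every dot $(\alpha,\beta)\in\triangle_{\delta,\varepsilon}$ (including the vertex $(\delta,\varepsilon)$) the number of black dots in $\triangle_{\alpha,\beta}$ is at most $\beta-\alpha-1$, with equality if and only if $(\alpha,\beta)$ is black. (For $e=4$ the triangle is empty and has exactly one colouring.) *)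

theory Defs
  imports Main
begin

definition triangle :: "int \<Rightarrow> int \<Rightarrow> (int \<times> int) set" where
  "triangle d e = {(a, b). d \<le> a \<and> b \<le> e \<and> b - a \<ge> 2}"

text \<open>A colouring of a triangle is represented by its set of black dots B (a subset of
  the triangle); all other dots of the triangle are white.\<close>
definition sparse :: "int \<Rightarrow> int \<Rightarrow> (int \<times> int) set \<Rightarrow> bool" where
  "sparse d e B \<longleftrightarrow>
     (\<forall>(a, b) \<in> triangle d e.
        int (card (B \<inter> triangle a b)) \<le> b - a - 1 \<and>
        (int (card (B \<inter> triangle a b)) = b - a - 1 \<longleftrightarrow> (a, b) \<in> B))"

definition sparse_colourings :: "int \<Rightarrow> int \<Rightarrow> (int \<times> int) set set" where
  "sparse_colourings d e = {B. B \<subseteq> triangle d e \<and> sparse d e B}"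

end

theory Submission imports Defs begin


definition Dv :: "(int\<times>int) set \<Rightarrow> int \<Rightarrow> int \<Rightarrow> int" where
  "Dv B a b = b - a - 1 - int (card (B \<inter> triangle a b))"

definition rowset :: "int \<Rightarrow> int \<Rightarrow> (int\<times>int) set" where
  "rowset d b = {(a,c). a = d \<and> d+2 \<le> c \<and> c \<le> b}"

lemma finite_triangle[simp]: "finite (triangle a b)"
proof -
  have "triangle a b \<subseteq> {a..b} \<times> {a..b}" unfolding triangle_def by auto
  thus ?thesis by (rule finite_subset) auto
qed

lemma finite_rowset[simp]: "finite (rowset d b)"
proof -
  have "rowset d b \<subseteq> {d} \<times> {d..b}" unfolding rowset_def by auto
  thus ?thesis by (rule finite_subset) auto
qed

lemma triangle_empty: "b < a + 2 \<Longrightarrow> triangle a b = {}"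
  unfolding triangle_def by auto

lemma tri_split: "triangle d b = triangle (d+1) b \<union> rowset d b"
  unfolding triangle_def rowset_def by auto

lemma tri_disj: "triangle (d+1) b \<inter> rowset d b = {}"
  unfolding triangle_def rowset_def by auto

lemma tri_mono: "d \<le> a \<Longrightarrow> b \<le> e \<Longrightarrow> triangle a b \<subseteq> triangle d e"
  unfolding triangle_def by auto

lemma card_split:
  "card (B \<inter> triangle d b) = card (B \<inter> triangle (d+1) b) + card (B \<inter> rowset d b)"
proof -
  have "B \<inter> triangle d b = (B \<inter> triangle (d+1) b) \<union> (B \<inter> rowset d b)"
    using tri_split[of d b] by blast
  moreover have "(B \<inter> triangle (d+1) b) \<inter> (B \<inter> rowset d b) = {}" using tri_disj by auto
  ultimately show ?thesis by (simp add: card_Un_disjoint)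
qed

lemma Dv_split: "Dv B d c = Dv B (d+1) c + 1 - int (card (B \<inter> rowset d c))"
  unfolding Dv_def using card_split[of B d c] by simp

lemma Dv_empty: "b < a + 2 \<Longrightarrow> Dv B a b = b - a - 1"
  unfolding Dv_def using triangle_empty by simp

lemma Dv_step: "Dv B a (b+1) \<le> Dv B a b + 1"
proof -
  have "card (B \<inter> triangle a b) \<le> card (B \<inter> triangle a (b+1))"
    by (rule card_mono) (auto simp: triangle_def intro: finite_subset[OF _ finite_triangle[of a "b+1"]])
  thus ?thesis unfolding Dv_def by simp
qed

lemma Dv_restrict: "d' \<le> a \<Longrightarrow> b \<le> e \<Longrightarrow> Dv (B \<inter> triangle d' e) a b = Dv B a b"
proof -
  assume "d' \<le> a" "b \<le> e"
  hence "triangle a b \<subseteq> triangle d' e" by (rule tri_mono)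
  hence "B \<inter> triangle d' e \<inter> triangle a b = B \<inter> triangle a b" by auto
  thus ?thesis unfolding Dv_def by simp
qed

lemma cond_Dv: "(int (card (B \<inter> triangle a b)) \<le> b - a - 1 \<and> (int (card (B \<inter> triangle a b)) = b - a - 1 \<longleftrightarrow> P)) \<longleftrightarrow> (0 \<le> Dv B a b \<and> (Dv B a b = 0 \<longleftrightarrow> P))"
  unfolding Dv_def by auto

lemma sparse_Dv: "sparse d e B \<longleftrightarrow>
  (\<forall>(a,b)\<in>triangle d e. 0 \<le> Dv B a b \<and> (Dv B a b = 0 \<longleftrightarrow> (a,b) \<in> B))"
  unfolding sparse_def by (simp only: cond_Dv)

lemma sparse_split: "sparse d e B \<longleftrightarrow> sparse (d+1) e B \<and>
  (\<forall>(a,b)\<in>rowset d e. 0 \<le> Dv B a b \<and> (Dv B a b = 0 \<longleftrightarrow> (a,b) \<in> B))"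
  unfolding sparse_Dv using tri_split[of d e] by blast

lemma sparse_restrict: "sparse d e (B \<inter> triangle d e) \<longleftrightarrow> sparse d e B"
  unfolding sparse_Dv
proof (intro ball_cong refl)
  fix x assume x: "x \<in> triangle d e"
  obtain a b where xab: "x = (a,b)" by fastforce
  have "d \<le> a" "b \<le> e" using x xab by (auto simp: triangle_def)
  thus "(case x of (a, b) \<Rightarrow> 0 \<le> Dv (B \<inter> triangle d e) a b \<and> (Dv (B \<inter> triangle d e) a b = 0) = ((a, b) \<in> B \<inter> triangle d e)) =
         (case x of (a, b) \<Rightarrow> 0 \<le> Dv B a b \<and> (Dv B a b = 0) = ((a, b) \<in> B))"
    using Dv_restrict x xab by auto
qed

lemma sparse_nonneg: "sparse d e B \<Longrightarrow> d \<le> a \<Longrightarrow> b \<le> e \<Longrightarrow> a < b \<Longrightarrow> 0 \<le> Dv B a b"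
proof -
  assume s: "sparse d e B" and h: "d \<le> a" "b \<le> e" "a < b"
  show ?thesis
  proof (cases "b < a + 2")
    case True thus ?thesis using Dv_empty h by simp
  next
    case False
    hence "(a,b) \<in> triangle d e" using h by (auto simp: triangle_def)
    thus ?thesis using s unfolding sparse_Dv by auto
  qed
qed
definition rowf :: "int \<Rightarrow> int \<Rightarrow> (int\<times>int) set \<Rightarrow> nat \<Rightarrow> nat" where
  "rowf d e B = (\<lambda>i. if int i < e - d then nat (Dv B d (d + 1 + int i)) else 0)"

definition seqs :: "nat \<Rightarrow> (nat \<Rightarrow> nat) set" where
  "seqs n = {r. r 0 = 0 \<and> (\<forall>i. Suc i < n \<longrightarrow> r (Suc i) \<le> Suc (r i)) \<and> (\<forall>i\<ge>n. r i = 0)}"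

lemma row_in_seqs:
  assumes B: "B \<in> sparse_colourings d e" and de: "d < e"
  shows "rowf d e B \<in> seqs (nat (e - d))"
proof -
  have s: "sparse d e B" using B by (simp add: sparse_colourings_def)
  have "rowf d e B 0 = 0" using de Dv_empty[of "d+1" d B] by (simp add: rowf_def)
  moreover have "rowf d e B (Suc i) \<le> Suc (rowf d e B i)" if "Suc i < nat (e - d)" for i
  proof -
    have "0 \<le> Dv B d (d + 1 + int i)" using sparse_nonneg[OF s, of d "d+1+int i"] that by simp
    moreover have "Dv B d (d + 1 + int i + 1) \<le> Dv B d (d + 1 + int i) + 1" by (rule Dv_step)
    ultimately show ?thesis using that by (simp add: rowf_def add.assoc nat_le_iff)
  qed
  moreover have "rowf d e B i = 0" if "i \<ge> nat (e - d)" for i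
    using that by (simp add: rowf_def)
  ultimately show ?thesis unfolding seqs_def by blast
qed

lemma sc_restrict: "B \<in> sparse_colourings d e \<Longrightarrow> B \<inter> triangle (d+1) e \<in> sparse_colourings (d+1) e"
proof -
  assume "B \<in> sparse_colourings d e"
  hence "sparse d e B" by (simp add: sparse_colourings_def)
  hence "sparse (d+1) e B" using sparse_split by blast
  hence "sparse (d+1) e (B \<inter> triangle (d+1) e)" using sparse_restrict by blast
  thus ?thesis by (simp add: sparse_colourings_def)
qed


lemma base_case:
  assumes "e - d - 1 = 0"
  shows "inj_on (rowf d e) (sparse_colourings d e) \<and> seqs (Suc 0) \<subseteq> rowf d e ` sparse_colourings d e"
proof -
  have ed: "e = d + 1" using assms by simp
  have T: "triangle d e = {}" using ed triangle_empty[of e d] by simp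
  have SC: "sparse_colourings d e = {{}}"
  proof -
    have "sparse d e {}" unfolding sparse_def T by blast
    thus ?thesis unfolding sparse_colourings_def T by blast
  qed
  have R: "rowf d e {} = (\<lambda>_. 0)"
  proof
    fix i show "rowf d e {} i = 0" unfolding rowf_def Dv_def using ed by simp
  qed
  have "r = (\<lambda>_. 0)" if "r \<in> seqs (Suc 0)" for r
  proof (rule ext)
    fix i show "r i = 0" using that by (cases i) (auto simp: seqs_def)
  qed
  thus ?thesis using SC R by auto
qed

lemma inj_step:
  assumes IH: "inj_on (rowf (d+1) e) (sparse_colourings (d+1) e)"
    and B1: "B1 \<in> sparse_colourings d e" and B2: "B2 \<in> sparse_colourings d e"
    and eq: "rowf d e B1 = rowf d e B2"
  shows "B1 = B2"
proof -
  have s1: "sparse d e B1" and s2: "sparse d e B2" using B1 B2 by (auto simp: sparse_colourings_def)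
  have D: "Dv B1 d c = Dv B2 d c" if "d+1 \<le> c" "c \<le> e" for c
  proof -
    define i where "i = nat (c - d - 1)"
    have ci: "c = d + 1 + int i" using that i_def by simp
    have "rowf d e B1 i = rowf d e B2 i" using eq by simp
    hence "nat (Dv B1 d c) = nat (Dv B2 d c)" using that ci by (simp add: rowf_def)
    moreover have "0 \<le> Dv B1 d c" "0 \<le> Dv B2 d c"
      using sparse_nonneg[OF s1, of d c] sparse_nonneg[OF s2, of d c] that by auto
    ultimately show ?thesis by simp
  qed
  have RW: "B1 \<inter> rowset d e = B2 \<inter> rowset d e"
  proof -
    have "(x \<in> B1) = (x \<in> B2)" if xr: "x \<in> rowset d e" for x
    proof -
      obtain c where x: "x = (d,c)" "d+2 \<le> c" "c \<le> e" using xr by (cases x) (auto simp: rowset_def)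
      have "(x \<in> B1) = (Dv B1 d c = 0)" using s1 xr x sparse_split[of d e B1] by auto
      moreover have "(x \<in> B2) = (Dv B2 d c = 0)" using s2 xr x sparse_split[of d e B2] by auto
      ultimately show ?thesis using D[of c] x by simp
    qed
    thus ?thesis by blast
  qed
  have RWc: "B1 \<inter> rowset d c = B2 \<inter> rowset d c" if "c \<le> e" for c
  proof -
    have "rowset d c \<subseteq> rowset d e" using that by (auto simp: rowset_def)
    thus ?thesis using RW by blast
  qed
  have D1: "Dv B1 (d+1) c = Dv B2 (d+1) c" if "d+1 \<le> c" "c \<le> e" for c
    using Dv_split[of B1 d c] Dv_split[of B2 d c] D[OF that] RWc[OF that(2)] by simp
  have "rowf (d+1) e (B1 \<inter> triangle (d+1) e) = rowf (d+1) e (B2 \<inter> triangle (d+1) e)"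
  proof (rule ext)
    fix i
    show "rowf (d+1) e (B1 \<inter> triangle (d+1) e) i = rowf (d+1) e (B2 \<inter> triangle (d+1) e) i"
    proof (cases "int i < e - (d+1)")
      case True
      have c: "d+1 \<le> d + 1 + 1 + int i" "d + 1 + 1 + int i \<le> e" using True by auto
      show ?thesis using True Dv_restrict[of "d+1" "d+1" "d+1+1+int i" e B1]
          Dv_restrict[of "d+1" "d+1" "d+1+1+int i" e B2] D1[OF c] c
        by (simp add: rowf_def)
    next
      case False thus ?thesis by (simp add: rowf_def)
    qed
  qed
  hence "B1 \<inter> triangle (d+1) e = B2 \<inter> triangle (d+1) e"
    using IH sc_restrict[OF B1] sc_restrict[OF B2] by (auto dest: inj_onD)
  moreover have "B1 = (B1 \<inter> triangle (d+1) e) \<union> (B1 \<inter> rowset d e)"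
    using B1 tri_split[of d e] by (auto simp: sparse_colourings_def)
  moreover have "B2 = (B2 \<inter> triangle (d+1) e) \<union> (B2 \<inter> rowset d e)"
    using B2 tri_split[of d e] by (auto simp: sparse_colourings_def)
  ultimately show ?thesis using RW by simp
qed


lemma surj_step:
  assumes IH: "seqs (Suc n) \<subseteq> rowf (d+1) e ` sparse_colourings (d+1) e"
    and en: "e - d - 1 = int (Suc n)"
    and r: "r \<in> seqs (Suc (Suc n))"
  shows "r \<in> rowf d e ` sparse_colourings d e"
proof -
  have r0: "r 0 = 0" and rstep: "\<And>i. Suc i < Suc (Suc n) \<Longrightarrow> r (Suc i) \<le> Suc (r i)"
    and rz: "\<And>i. i \<ge> Suc (Suc n) \<Longrightarrow> r i = 0" using r by (auto simp: seqs_def)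
  define X where "X i = card {j. j \<le> i \<and> r (Suc j) = 0}" for i
  have finX: "finite {j. j \<le> i \<and> r (Suc j) = 0}" for i
    by (rule finite_subset[of _ "{..i}"]) auto
  have X0: "X 0 = (if r 1 = 0 then 1 else 0)"
  proof -
    have "{j. j \<le> 0 \<and> r (Suc j) = 0} = (if r 1 = 0 then {0} else {})" by (cases "r 1 = 0") (auto intro!: gr0I)
    thus ?thesis unfolding X_def by simp
  qed
  have XS: "X (Suc i) = X i + (if r (Suc (Suc i)) = 0 then 1 else 0)" for i
  proof -
    have "{j. j \<le> Suc i \<and> r (Suc j) = 0} = {j. j \<le> i \<and> r (Suc j) = 0} \<union>
        (if r (Suc (Suc i)) = 0 then {Suc i} else {})" by (auto simp: le_Suc_eq)
    thus ?thesis unfolding X_def using finX[of i] by (simp add: card_insert_if)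
  qed
  have Xpos: "1 \<le> X i" if "r (Suc i) = 0" for i
  proof -
    have "{i} \<subseteq> {j. j \<le> i \<and> r (Suc j) = 0}" using that by auto
    from card_mono[OF finX this] show ?thesis unfolding X_def by simp
  qed
  have rX: "1 \<le> r (Suc i) + X i" for i using Xpos[of i] by (cases "r (Suc i) = 0") auto
  define q where "q i = (if i < Suc n then r (Suc i) + X i - 1 else 0)" for i
  have q: "q \<in> seqs (Suc n)"
  proof -
    have "r 1 \<le> 1" using rstep[of 0] r0 by simp
    hence "q 0 = 0" unfolding q_def using X0 by auto
    moreover have "q (Suc i) \<le> Suc (q i)" if "Suc i < Suc n" for i
    proof -
      have "r (Suc (Suc i)) \<le> Suc (r (Suc i))" using rstep[of "Suc i"] that by simp
      thus ?thesis unfolding q_def using that XS[of i] rX[of i] by auto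
    qed
    moreover have "q i = 0" if "i \<ge> Suc n" for i using that unfolding q_def by simp
    ultimately show ?thesis unfolding seqs_def by blast
  qed
  obtain B' where B': "B' \<in> sparse_colourings (d+1) e" and rq: "rowf (d+1) e B' = q"
    using IH q by blast
  have B'sub: "B' \<subseteq> triangle (d+1) e" and s': "sparse (d+1) e B'"
    using B' by (auto simp: sparse_colourings_def)
  define Rw where "Rw = (\<lambda>j. (d, d + 2 + int j)) ` {j. j \<le> n \<and> r (Suc j) = 0}"
  define B where "B = B' \<union> Rw"
  have ed: "e = d + 2 + int n" using en by simp
  have Rwsub: "Rw \<subseteq> rowset d e" unfolding Rw_def rowset_def ed by auto
  have Bsub: "B \<subseteq> triangle d e" unfolding B_def using B'sub Rwsub tri_split[of d e] by blast
  have BT: "B \<inter> triangle (d+1) e = B'"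
    unfolding B_def using B'sub Rwsub tri_disj[of d e] by blast
  have sB1: "sparse (d+1) e B" using sparse_restrict[of "d+1" e B] BT s' by simp
  have B'row: "B' \<inter> rowset d c = {}" for c
    using B'sub by (auto simp: rowset_def triangle_def)
  have Brow: "B \<inter> rowset d (d + 2 + int i) = (\<lambda>j. (d, d+2+int j)) ` {j. j \<le> i \<and> r (Suc j) = 0}"
    if "i \<le> n" for i
  proof -
    have "Rw \<inter> rowset d (d + 2 + int i) = (\<lambda>j. (d, d+2+int j)) ` {j. j \<le> i \<and> r (Suc j) = 0}"
      unfolding Rw_def rowset_def using that by auto
    thus ?thesis unfolding B_def using B'row by blast
  qed
  have cardX: "card (B \<inter> rowset d (d + 2 + int i)) = X i" if "i \<le> n" for i
  proof -
    have "inj_on (\<lambda>j::nat. (d, d+2+int j)) {j. j \<le> i \<and> r (Suc j) = 0}" by (auto simp: inj_on_def)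
    thus ?thesis unfolding Brow[OF that] X_def by (simp add: card_image)
  qed
  have DvB: "Dv B d (d + 2 + int i) = int (r (Suc i))" if "i \<le> n" for i
  proof -
    let ?c = "d + 2 + int i"
    have "Dv B (d+1) ?c = Dv B' (d+1) ?c"
      using Dv_restrict[of "d+1" "d+1" ?c e B] BT that ed by simp
    moreover have "q i = nat (Dv B' (d+1) ?c)"
      using rq[symmetric] that ed by (simp add: rowf_def add.assoc)
    moreover have "0 \<le> Dv B' (d+1) ?c" using sparse_nonneg[OF s', of "d+1" ?c] that ed by simp
    moreover have "int (q i) = int (r (Suc i)) + int (X i) - 1"
      unfolding q_def using that rX[of i] by auto
    ultimately show ?thesis using Dv_split[of B d ?c] cardX[OF that] by simp
  qed
  have sB: "sparse d e B"
  proof -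
    have "0 \<le> Dv B a b \<and> (Dv B a b = 0 \<longleftrightarrow> (a,b) \<in> B)" if ab: "(a,b) \<in> rowset d e" for a b
    proof -
      have a: "a = d" and b: "d + 2 \<le> b" "b \<le> e" using ab by (auto simp: rowset_def)
      define i where "i = nat (b - d - 2)"
      have bi: "b = d + 2 + int i" and i: "i \<le> n" using b ed i_def by auto
      have "(a,b) \<notin> B'" using B'sub a by (auto simp: triangle_def)
      hence "((a,b) \<in> B) = ((a,b) \<in> Rw)" unfolding B_def by blast
      also have "\<dots> = (r (Suc i) = 0)" unfolding Rw_def a bi using i by auto
      finally show ?thesis using DvB[OF i] bi a by simp
    qed
    thus ?thesis using sparse_split[of d e B] sB1 by blast
  qed
  have "rowf d e B = r"
  proof
    fix i
    show "rowf d e B i = r i"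
    proof (cases "int i < e - d")
      case True
      show ?thesis
      proof (cases i)
        case 0 thus ?thesis using r0 Dv_empty[of "d+1" d B] by (simp add: rowf_def ed)
      next
        case (Suc k)
        hence "k \<le> n" using True ed by simp
        thus ?thesis using DvB[of k] True Suc by (simp add: rowf_def add.assoc)
      qed
    next
      case False thus ?thesis using rz[of i] ed by (simp add: rowf_def)
    qed
  qed
  moreover have "B \<in> sparse_colourings d e" using Bsub sB by (simp add: sparse_colourings_def)
  ultimately show ?thesis by blast
qed



lemma bij_main: "\<forall>d. e - d - 1 = int n \<longrightarrow> inj_on (rowf d e) (sparse_colourings d e) \<and>
   seqs (Suc n) \<subseteq> rowf d e ` sparse_colourings d e"
proof (induction n)
  case 0 thus ?case using base_case by simp
next
  case (Suc n)
  show ?case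
  proof (intro allI impI conjI)
    fix d assume en: "e - d - 1 = int (Suc n)"
    have "e - (d+1) - 1 = int n" using en by simp
    hence IH: "inj_on (rowf (d+1) e) (sparse_colourings (d+1) e)"
      "seqs (Suc n) \<subseteq> rowf (d+1) e ` sparse_colourings (d+1) e" using Suc.IH by auto
    show "inj_on (rowf d e) (sparse_colourings d e)"
      by (rule inj_onI) (rule inj_step[OF IH(1)])
    show "seqs (Suc (Suc n)) \<subseteq> rowf d e ` sparse_colourings d e"
      using surj_step[OF IH(2) en] by blast
  qed
qed

lemma card_sc: "e - d - 1 = int n \<Longrightarrow> card (sparse_colourings d e) = card (seqs (Suc n))"
proof -
  assume en: "e - d - 1 = int n"
  have I: "inj_on (rowf d e) (sparse_colourings d e)"
    and S: "seqs (Suc n) \<subseteq> rowf d e ` sparse_colourings d e" using bij_main en by auto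
  have "rowf d e ` sparse_colourings d e \<subseteq> seqs (Suc n)"
  proof
    fix x assume "x \<in> rowf d e ` sparse_colourings d e"
    then obtain B where B: "B \<in> sparse_colourings d e" and x: "x = rowf d e B" by blast
    have "nat (e - d) = Suc n" using en by simp
    moreover have "d < e" using en by simp
    ultimately show "x \<in> seqs (Suc n)" using row_in_seqs[OF B] x by simp
  qed
  hence "rowf d e ` sparse_colourings d e = seqs (Suc n)" using S by blast
  thus ?thesis using card_image[OF I] by simp
qed

lemma seqs_bound: "r \<in> seqs n \<Longrightarrow> r i \<le> i"
proof (induction i)
  case 0 thus ?case by (simp add: seqs_def)
next
  case (Suc i)
  thus ?case by (cases "Suc i < n") (auto simp: seqs_def intro: le_trans)
qed

lemma finite_seqs: "finite (seqs n)"
proof -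
  have inj: "inj_on (\<lambda>r. map r [0..<n]) (seqs n)"
  proof (rule inj_onI)
    fix r r' assume r: "r \<in> seqs n" and r': "r' \<in> seqs n" and eq: "map r [0..<n] = map r' [0..<n]"
    show "r = r'"
    proof
      fix i show "r i = r' i"
      proof (cases "i < n")
        case True thus ?thesis using eq map_eq_conv by fastforce
      next
        case False thus ?thesis using r r' by (simp add: seqs_def)
      qed
    qed
  qed
  have "(\<lambda>r. map r [0..<n]) ` seqs n \<subseteq> {xs. set xs \<subseteq> {..n} \<and> length xs = n}"
  proof
    fix xs assume "xs \<in> (\<lambda>r. map r [0..<n]) ` seqs n"
    then obtain r where r: "r \<in> seqs n" and xs: "xs = map r [0..<n]" by blast
    have "r i \<le> n" if "i < n" for i using seqs_bound[OF r, of i] that by simp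
    thus "xs \<in> {xs. set xs \<subseteq> {..n} \<and> length xs = n}" using xs by auto
  qed
  moreover have "finite {xs. set xs \<subseteq> {..n::nat} \<and> length xs = n}"
    by (rule finite_lists_length_eq) simp
  ultimately have "finite ((\<lambda>r. map r [0..<n]) ` seqs n)" by (rule finite_subset)
  thus ?thesis using finite_imageD[OF _ inj] by blast
qed

definition A :: "nat \<Rightarrow> nat \<Rightarrow> nat" where
  "A m k = card {r \<in> seqs (Suc m). r m = k}"

lemma rec1: "card {r \<in> seqs (Suc (Suc m)). r (Suc m) = k} = card {r \<in> seqs (Suc m). k \<le> Suc (r m)}"
proof -
  let ?L = "{r \<in> seqs (Suc (Suc m)). r (Suc m) = k}"
  let ?R = "{r \<in> seqs (Suc m). k \<le> Suc (r m)}"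
  have "bij_betw (\<lambda>r. r(Suc m := 0)) ?L ?R"
  proof (rule bij_betw_byWitness[where f' = "\<lambda>r. r(Suc m := k)"])
    show "\<forall>a\<in>?L. a(Suc m := 0, Suc m := k) = a" by auto
    show "\<forall>a\<in>?R. a(Suc m := k, Suc m := 0) = a"
      by (auto simp: seqs_def)
    show "(\<lambda>r. r(Suc m := 0)) ` ?L \<subseteq> ?R"
    proof
      fix x assume "x \<in> (\<lambda>r. r(Suc m := 0)) ` ?L"
      then obtain r where r: "r \<in> seqs (Suc (Suc m))" "r (Suc m) = k" and x: "x = r(Suc m := 0)" by blast
      have "r (Suc m) \<le> Suc (r m)" using r(1) by (simp add: seqs_def)
      thus "x \<in> ?R" using r x unfolding seqs_def by (auto simp: le_Suc_eq)
    qed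
    show "(\<lambda>r. r(Suc m := k)) ` ?R \<subseteq> ?L"
    proof
      fix x assume "x \<in> (\<lambda>r. r(Suc m := k)) ` ?R"
      then obtain r where r: "r \<in> seqs (Suc m)" "k \<le> Suc (r m)" and x: "x = r(Suc m := k)" by blast
      show "x \<in> ?L" using r x unfolding seqs_def by (auto simp: less_Suc_eq)
    qed
  qed
  thus ?thesis by (rule bij_betw_same_card)
qed

lemma rec2: "card {r \<in> seqs (Suc m). k \<le> Suc (r m)} = (\<Sum>j\<in>{j. j \<le> m \<and> k \<le> Suc j}. A m j)"
proof -
  have "{r \<in> seqs (Suc m). k \<le> Suc (r m)} = (\<Union>j\<in>{j. j \<le> m \<and> k \<le> Suc j}. {r \<in> seqs (Suc m). r m = j})"
    using seqs_bound by fastforce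
  moreover have "card (\<Union>j\<in>{j. j \<le> m \<and> k \<le> Suc j}. {r \<in> seqs (Suc m). r m = j}) =
      (\<Sum>j\<in>{j. j \<le> m \<and> k \<le> Suc j}. card {r \<in> seqs (Suc m). r m = j})"
    by (rule card_UN_disjoint) (auto intro: finite_subset[OF _ finite_seqs])
  ultimately show ?thesis by (simp add: A_def)
qed


lemma hockey: "a \<le> m \<Longrightarrow> (\<Sum>j\<in>{a..m}. (2*m - j) choose c) + (m choose Suc c) = Suc (2*m - a) choose Suc c"
proof (induction a rule: inc_induct)
  case base thus ?case by simp
next
  case (step a)
  have "(\<Sum>j\<in>{a..m}. (2*m - j) choose c) = ((2*m - a) choose c) + (\<Sum>j\<in>{Suc a..m}. (2*m - j) choose c)"
    using step.hyps by (simp add: sum.atLeast_Suc_atMost)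
  moreover have "Suc (2*m - Suc a) = 2*m - a" using step.hyps by simp
  ultimately show ?case using step.IH by simp
qed

lemma seqs1: "seqs (Suc 0) = {\<lambda>_. 0}"
proof -
  have "r = (\<lambda>_. 0)" if "r \<in> seqs (Suc 0)" for r
  proof (rule ext)
    fix i show "r i = 0" using that by (cases i) (auto simp: seqs_def)
  qed
  moreover have "(\<lambda>_. 0::nat) \<in> seqs (Suc 0)" by (simp add: seqs_def)
  ultimately show ?thesis by blast
qed

lemma A_Suc: "A (Suc m) k = (\<Sum>j\<in>{j. j \<le> m \<and> k \<le> Suc j}. A m j)"
proof -
  have "A (Suc m) k = card {r \<in> seqs (Suc (Suc m)). r (Suc m) = k}" by (simp add: A_def)
  also have "\<dots> = card {r \<in> seqs (Suc m). k \<le> Suc (r m)}" by (rule rec1)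
  also have "\<dots> = (\<Sum>j\<in>{j. j \<le> m \<and> k \<le> Suc j}. A m j)" by (rule rec2)
  finally show ?thesis .
qed

lemma A_closed: "k \<le> m \<Longrightarrow> int (A m k) = int ((2*m - k) choose m) - int ((2*m - k) choose Suc m)"
proof (induction m arbitrary: k)
  case 0
  hence "k = 0" by simp
  moreover have "{r \<in> seqs (Suc 0). r 0 = 0} = {\<lambda>_. 0}" by (auto simp: seqs1)
  ultimately show ?case by (simp add: A_def)
next
  case (Suc m)
  define a where "a = k - 1"
  have J: "{j. j \<le> m \<and> k \<le> Suc j} = {a..m}" unfolding a_def by auto
  have am: "a \<le> m" using Suc.prems a_def by simp
  have "int (A (Suc m) k) = (\<Sum>j\<in>{a..m}. int (A m j))" using A_Suc[of m k] J by simp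
  also have "\<dots> = (\<Sum>j\<in>{a..m}. int ((2*m - j) choose m) - int ((2*m - j) choose Suc m))"
    using Suc.IH by (intro sum.cong) auto
  also have "\<dots> = int (\<Sum>j\<in>{a..m}. (2*m - j) choose m) - int (\<Sum>j\<in>{a..m}. (2*m - j) choose Suc m)"
    by (simp add: sum_subtractf)
  also have "\<dots> = int (Suc (2*m - a) choose Suc m) - int (Suc (2*m - a) choose Suc (Suc m))"
  proof -
    have h1: "(\<Sum>j\<in>{a..m}. (2*m - j) choose m) = Suc (2*m - a) choose Suc m"
    proof -
      have "m choose Suc m = 0" by (rule binomial_eq_0) simp
      thus ?thesis using hockey[OF am, of m] by linarith
    qed
    have h2: "(\<Sum>j\<in>{a..m}. (2*m - j) choose Suc m) = Suc (2*m - a) choose Suc (Suc m)"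
    proof -
      have "m choose Suc (Suc m) = 0" by (rule binomial_eq_0) simp
      thus ?thesis using hockey[OF am, of "Suc m"] by linarith
    qed
    show ?thesis by (simp only: h1 h2)
  qed
  finally have X: "int (A (Suc m) k) = int (Suc (2*m - a) choose Suc m) - int (Suc (2*m - a) choose Suc (Suc m))" .
  show ?case
  proof (cases k)
    case 0
    have a0: "a = 0" using 0 a_def by simp
    have sym: "(Suc (2*m) choose m) = (Suc (2*m) choose Suc m)"
      using binomial_symmetric[of m "Suc (2*m)"] by (simp add: Suc_diff_le)
    have "2 * Suc m - k = Suc (Suc (2*m))" using 0 by simp
    thus ?thesis using X a0 sym by simp
  next
    case (Suc k')
    hence "Suc (2*m - a) = 2 * Suc m - k" using a_def Suc.prems by simp
    thus ?thesis using X by simp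
  qed
qed

lemma card_seqs: "int (card (seqs (Suc m))) = int ((2 * Suc m) choose Suc m) - int ((2 * Suc m) choose Suc (Suc m))"
proof -
  have "card (seqs (Suc m)) = card {r \<in> seqs (Suc m). 0 \<le> Suc (r m)}" by simp
  also have "\<dots> = A (Suc m) 0" unfolding A_def using rec1[of m 0] by simp
  finally show ?thesis using A_closed[of 0 "Suc m"] by simp
qed

theorem mainTheorem2:
  fixes e :: nat
  assumes "e \<ge> 4"
  shows "card (sparse_colourings 2 (int e - 1)) = ((2 * (e - 3)) choose (e - 3)) div (e - 2)"
proof -
  define m where "m = e - 4"
  have em: "e - 3 = Suc m" "e - 2 = Suc (Suc m)" using assms m_def by auto
  have "(int e - 1) - 2 - 1 = int m" using assms m_def by simp
  hence c: "card (sparse_colourings 2 (int e - 1)) = card (seqs (Suc m))" by (rule card_sc)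
  have id: "Suc (Suc m) * ((2 * Suc m) choose Suc (Suc m)) = Suc m * ((2 * Suc m) choose Suc m)"
  proof -
    have eq2: "Suc (Suc m + m) = 2 * Suc m" by simp
    show ?thesis using Suc_times_binomial_add[of "Suc m" m] unfolding eq2 .
  qed
  let ?X = "(2 * Suc m) choose Suc m" and ?Y = "(2 * Suc m) choose Suc (Suc m)"
  have cs: "card (seqs (Suc m)) + ?Y = ?X" using card_seqs[of m] by linarith
  have "?X = Suc (Suc m) * card (seqs (Suc m))"
  proof -
    have "Suc (Suc m) * ?X = Suc (Suc m) * card (seqs (Suc m)) + Suc (Suc m) * ?Y"
      using cs by (metis distrib_left)
    hence "Suc (Suc m) * ?X = Suc (Suc m) * card (seqs (Suc m)) + Suc m * ?X" using id by simp
    thus ?thesis by simp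
  qed
  hence "?X div Suc (Suc m) = Suc (Suc m) * card (seqs (Suc m)) div Suc (Suc m)" by (simp only:)
  also have "\<dots> = card (seqs (Suc m))" by (rule nonzero_mult_div_cancel_left) simp
  finally have "?X div Suc (Suc m) = card (seqs (Suc m))" .
  thus ?thesis using c em by simp
qed

end
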